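(* Every xor-set $\mathcal{X}\subseteq\mathbb{Z}_2^\omega$ is a maximal (with respect to inclusion) thin set. In particular, $\mathcal{X}$ is not Borel.
   Context: $\mathbb{Z}_2^\omega$ is the Cantor cube of infinite binary sequences indexed by $\omega=\{0,1,2,\dots\}$, with the product topology. A set $T\subseteq\mathbb{Z}_2^\omega$ is thin if for every $n\in\omega$ the map $x\mapsto x|_{\omega\setminus\{n\}}$ is injective on $T$. For $x\in\mathbb{Z}_2^\omega$ and $n\in\omega$, $x^{\#n}$ is the sequence obtained from $x$ by flipping the $n$-th coordinate. A set $\mathcal{X}\subseteq\mathbb{Z}_2^\omega$ is a xor-set if for every $n\in\omega$ and $x\in\mathbb{Z}_2^\omega$: $x\in\mathcal{X}\iff x^{\#n}\notin\mathcal{X}$. *)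

theory Defs
  imports "HOL-Analysis.Analysis"
begin

text \<open>The Cantor cube Z_2^omega is modelled as the type nat \<Rightarrow> bool, whose
  topology (instance from Function_Topology) is the product topology of the discrete
  (order) topology on bool.\<close>

definition thin :: "(nat \<Rightarrow> bool) set \<Rightarrow> bool" where
  "thin T \<longleftrightarrow> (\<forall>n::nat. inj_on (\<lambda>x. restrict x (UNIV - {n})) T)"

definition flip :: "(nat \<Rightarrow> bool) \<Rightarrow> nat \<Rightarrow> (nat \<Rightarrow> bool)" where
  "flip x n = x(n := \<not> x n)"

definition xor_set :: "(nat \<Rightarrow> bool) set \<Rightarrow> bool" where
  "xor_set X \<longleftrightarrow> (\<forall>n x. x \<in> X \<longleftrightarrow> flip x n \<notin> X)"

definition maximal_thin :: "(nat \<Rightarrow> bool) set \<Rightarrow> bool" where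
  "maximal_thin X \<longleftrightarrow> thin X \<and> (\<forall>T. thin T \<and> X \<subseteq> T \<longrightarrow> T = X)"

end

theory Submission
  imports Defs
begin

lemma H_t2: "Hausdorff_space (euclidean::'a::t2_space topology)"
  unfolding Hausdorff_space_def disjnt_def by (metis hausdorff open_openin)

lemma C_bool: "compact_space (euclidean::bool topology)"
  by (simp add: compact_space_def finite_imp_compact)

lemma C_cube: "compact_space (euclidean::(nat\<Rightarrow>bool) topology)"
  by (metis compact_space_product_topology euclidean_product_topology C_bool)

lemma H_cube: "Hausdorff_space (euclidean::(nat\<Rightarrow>bool) topology)"
  by (metis Hausdorff_space_product_topology euclidean_product_topology H_t2)

definition meager :: "(nat \<Rightarrow> bool) set \<Rightarrow> bool" where
  "meager M \<longleftrightarrow> (\<exists>G. countable G \<and> (\<forall>T\<in>G. closed T \<and> interior T = {}) \<and> M \<subseteq> \<Union>G)"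

lemma baire:
  assumes "open W" "W \<noteq> {}" "meager W"
  shows False
proof -
  obtain G where G: "countable G" "\<forall>T\<in>G. closed T \<and> interior T = {}" "W \<subseteq> \<Union>G"
    using assms(3) unfolding meager_def by blast
  have "euclidean interior_of \<Union>G = {}"
    apply (rule Baire_category_alt)
    using C_cube H_cube compact_imp_locally_compact_space compact_Hausdorff_imp_regular_space
       apply blast
    using G by (auto simp: closed_closedin[symmetric])
  hence "interior (\<Union>G) = {}" by simp
  moreover have "W \<subseteq> interior (\<Union>G)" using assms(1) G(3) by (simp add: interior_maximal)
  ultimately show False using assms(2) by blast
qed

lemma meager_subset: "meager M \<Longrightarrow> N \<subseteq> M \<Longrightarrow> meager N"
  unfolding meager_def by (meson order_trans)

lemma meager_Un: "meager M \<Longrightarrow> meager N \<Longrightarrow> meager (M \<union> N)"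
proof -
  assume "meager M" "meager N"
  then obtain G1 G2 where "countable G1" "\<forall>T\<in>G1. closed T \<and> interior T = {}" "M \<subseteq> \<Union>G1"
     "countable G2" "\<forall>T\<in>G2. closed T \<and> interior T = {}" "N \<subseteq> \<Union>G2"
    unfolding meager_def by metis
  then have "countable (G1 \<union> G2) \<and> (\<forall>T\<in>G1 \<union> G2. closed T \<and> interior T = {}) \<and> M \<union> N \<subseteq> \<Union>(G1 \<union> G2)"
    by auto
  then show ?thesis unfolding meager_def by (rule exI)
qed

lemma meager_UN: "(\<And>i::nat. meager (M i)) \<Longrightarrow> meager (\<Union>i. M i)"
proof -
  assume "\<And>i. meager (M i)"
  then have "\<forall>i. \<exists>G. countable G \<and> (\<forall>T\<in>G. closed T \<and> interior T = {}) \<and> M i \<subseteq> \<Union>G"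
    unfolding meager_def by blast
  then obtain G where G: "\<And>i. countable (G i) \<and> (\<forall>T\<in>G i. closed T \<and> interior T = {}) \<and> M i \<subseteq> \<Union>(G i)"
    by metis
  have "countable (\<Union>(range G))" using G by (simp add: countable_UN)
  moreover have "\<forall>T\<in>\<Union>(range G). closed T \<and> interior T = {}" using G by auto
  moreover have "(\<Union>i. M i) \<subseteq> \<Union>(\<Union>(range G))" using G by fastforce
  ultimately have "countable (\<Union>(range G)) \<and> (\<forall>T\<in>\<Union>(range G). closed T \<and> interior T = {}) \<and> (\<Union>i. M i) \<subseteq> \<Union>(\<Union>(range G))"
    by (intro conjI)
  then show ?thesis unfolding meager_def by (rule exI)
qed

definition fl :: "nat \<Rightarrow> (nat \<Rightarrow> bool) \<Rightarrow> (nat \<Rightarrow> bool)" where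
  "fl n x = flip x n"

lemma fl_fl[simp]: "fl n (fl n x) = x"
  unfolding fl_def flip_def by auto

lemma cont_fl: "continuous_on UNIV (fl n)"
proof -
  have "continuous_on UNIV (\<lambda>x. fl n x i)" for i
  proof (cases "i = n")
    case True
    have "continuous_on UNIV (Not \<circ> (\<lambda>x::nat\<Rightarrow>bool. x n))"
      by (intro continuous_on_compose) auto
    then show ?thesis using True by (simp add: fl_def flip_def o_def)
  next
    case False
    then show ?thesis by (simp add: fl_def flip_def)
  qed
  then show ?thesis by (intro continuous_on_coordinatewise_then_product)
qed

lemma meager_vimage: "meager M \<Longrightarrow> meager (fl n -` M)"
proof -
  assume "meager M"
  then obtain G where G: "countable G" "\<forall>T\<in>G. closed T \<and> interior T = {}" "M \<subseteq> \<Union>G"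
    unfolding meager_def by blast
  have "closed (fl n -` T) \<and> interior (fl n -` T) = {}" if "T \<in> G" for T
  proof
    show "closed (fl n -` T)" using G that cont_fl closed_vimage by blast
    show "interior (fl n -` T) = {}"
    proof (rule ccontr)
      assume "interior (fl n -` T) \<noteq> {}"
      then obtain y where y: "y \<in> interior (fl n -` T)" by blast
      let ?V = "fl n -` interior (fl n -` T)"
      have "open ?V" using cont_fl open_vimage by blast
      moreover have "?V \<subseteq> T" using interior_subset by fastforce
      moreover have "fl n y \<in> ?V" using y by simp
      ultimately have "fl n y \<in> interior T" by (meson interior_maximal subsetD)
      then show False using G that by auto
    qed
  qed
  then have a: "\<forall>T\<in>(\<lambda>T. fl n -` T) ` G. closed T \<and> interior T = {}" by blast
  have b: "countable ((\<lambda>T. fl n -` T) ` G)" using G by simp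
  have c: "fl n -` M \<subseteq> \<Union>((\<lambda>T. fl n -` T) ` G)" using G by blast
  have "countable ((\<lambda>T. fl n -` T) ` G) \<and> (\<forall>T\<in>(\<lambda>T. fl n -` T) ` G. closed T \<and> interior T = {}) \<and> fl n -` M \<subseteq> \<Union>((\<lambda>T. fl n -` T) ` G)"
    using a b c by (intro conjI)
  then show ?thesis unfolding meager_def by (rule exI)
qed

definition BP :: "(nat \<Rightarrow> bool) set \<Rightarrow> bool" where
  "BP A \<longleftrightarrow> (\<exists>U. open U \<and> meager ((A - U) \<union> (U - A)))"

lemma BP_compl: "BP A \<Longrightarrow> BP (UNIV - A)"
proof -
  assume "BP A"
  then obtain U where U: "open U" "meager ((A - U) \<union> (U - A))" unfolding BP_def by blast
  define V where "V = interior (- U)"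
  define F where "F = - U - V"
  have "closed F" unfolding F_def V_def using U(1) by auto
  moreover have "interior F = {}"
  proof -
    have "interior F \<subseteq> - U" unfolding F_def using interior_subset by blast
    hence "interior F \<subseteq> V" unfolding V_def by (simp add: interior_maximal)
    moreover have "interior F \<subseteq> F" by (rule interior_subset)
    ultimately show ?thesis unfolding F_def by blast
  qed
  ultimately have "meager F" unfolding meager_def by (rule_tac x="{F}" in exI) auto
  hence "meager (((A - U) \<union> (U - A)) \<union> F)" using U(2) meager_Un by blast
  moreover have "((UNIV - A) - V) \<union> (V - (UNIV - A)) \<subseteq> ((A - U) \<union> (U - A)) \<union> F"
    unfolding F_def V_def using interior_subset by blast
  ultimately show ?thesis unfolding BP_def
    by (metis meager_subset V_def open_interior)
qed

lemma BP_UN: "(\<And>i::nat. BP (A i)) \<Longrightarrow> BP (\<Union>i. A i)"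
proof -
  assume "\<And>i. BP (A i)"
  then obtain U where U: "\<And>i. open (U i) \<and> meager ((A i - U i) \<union> (U i - A i))"
    unfolding BP_def by metis
  have "meager (\<Union>i. (A i - U i) \<union> (U i - A i))" using U by (intro meager_UN) blast
  moreover have "((\<Union>i. A i) - (\<Union>i. U i)) \<union> ((\<Union>i. U i) - (\<Union>i. A i)) \<subseteq> (\<Union>i. (A i - U i) \<union> (U i - A i))"
    by blast
  moreover have "open (\<Union>i. U i)" using U by blast
  ultimately show ?thesis unfolding BP_def using meager_subset by blast
qed

lemma borel_BP:
  assumes "A \<in> sets (borel :: (nat \<Rightarrow> bool) measure)"
  shows "BP A"
proof -
  have "A \<in> sigma_sets UNIV {S. open S}" using assms by (simp add: sets_borel)
  then show ?thesis
  proof (induction rule: sigma_sets.induct)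
    case (Basic a)
    then show ?case unfolding BP_def meager_def
      by (rule_tac x=a in exI) (auto intro!: exI[of _ "{}"])
  next
    case Empty
    then show ?case unfolding BP_def meager_def
      by (rule_tac x="{}" in exI) (auto intro!: exI[of _ "{}"])
  next
    case (Compl a)
    then show ?case using BP_compl by blast
  next
    case (Union a)
    then show ?case using BP_UN by blast
  qed
qed

lemma xor_vimage:
  assumes "xor_set X" shows "fl n -` X = - X"
proof -
  have "fl n y \<in> X \<longleftrightarrow> y \<notin> X" for y
  proof -
    have "fl n y \<in> X \<longleftrightarrow> flip (fl n y) n \<notin> X" using assms unfolding xor_set_def by blast
    moreover have "flip (fl n y) n = y" using fl_fl[of n y] unfolding fl_def[of n "fl n y"] .
    ultimately show ?thesis by simp
  qed
  then show ?thesis by auto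
qed

lemma not_borel:
  assumes "xor_set X"
  shows "X \<notin> sets (borel :: (nat \<Rightarrow> bool) measure)"
proof
  assume "X \<in> sets (borel :: (nat \<Rightarrow> bool) measure)"
  then obtain U where U: "open U" "meager ((X - U) \<union> (U - X))"
    using borel_BP unfolding BP_def by blast
  show False
  proof (cases "U = {}")
    case True
    then have mX: "meager X" using U by simp
    then have "meager (fl 0 -` X)" by (rule meager_vimage)
    then have "meager (- X)" using xor_vimage[OF assms] by simp
    then have "meager (X \<union> - X)" using mX meager_Un by blast
    then show False using baire[of UNIV] by simp
  next
    case False
    then obtain x where "x \<in> U" by blast
    then have "openin (product_topology (\<lambda>i. euclidean) UNIV) U" "x \<in> U"
      using U(1) unfolding open_fun_def by auto
    from product_topology_open_contains_basis[OF this]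
    obtain Xs where Xs: "x \<in> (\<Pi>\<^sub>E i\<in>UNIV. Xs i)" "\<And>i. open (Xs i)"
       "finite {i. Xs i \<noteq> UNIV}" "(\<Pi>\<^sub>E i\<in>UNIV. Xs i) \<subseteq> U"
      by auto
    define W where "W = (\<Pi>\<^sub>E i\<in>UNIV. Xs i)"
    have oW: "open W" unfolding W_def using Xs by (intro open_PiE) auto
    have neW: "W \<noteq> {}" using Xs W_def by blast
    obtain N where N: "N \<notin> {i. Xs i \<noteq> UNIV}"
      using Xs(3) ex_new_if_finite infinite_UNIV_nat by blast
    have Wmem: "y \<in> W \<longleftrightarrow> (\<forall>i. y i \<in> Xs i)" for y
      unfolding W_def by (simp add: PiE_UNIV_domain Pi_iff)
    have fW: "fl N -` W = W"
    proof -
      have "fl N y \<in> W \<longleftrightarrow> y \<in> W" for y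
        unfolding Wmem using N by (auto simp: fl_def flip_def)
      then show ?thesis by auto
    qed
    have m1: "meager (W - X)"
      using U(2) Xs(4) W_def by (rule_tac meager_subset) auto
    have "fl N -` (W - X) = W \<inter> X" using fW xor_vimage[OF assms, of N] by auto
    then have m2: "meager (W \<inter> X)" using meager_vimage[OF m1, of N] by simp
    have "meager ((W - X) \<union> (W \<inter> X))" using m1 m2 meager_Un by blast
    moreover have "(W - X) \<union> (W \<inter> X) = W" by blast
    ultimately have "meager W" by simp
    then show False using baire oW neW by blast
  qed
qed

lemma thin_xor:
  assumes "xor_set X" shows "thin X"
  unfolding thin_def
proof (intro allI inj_onI)
  fix n x y assume xy: "x \<in> X" "y \<in> X" "restrict x (UNIV - {n}) = restrict y (UNIV - {n})"
  have eq: "x i = y i" if "i \<noteq> n" for i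
  proof -
    have "restrict x (UNIV - {n}) i = restrict y (UNIV - {n}) i" using xy(3) by simp
    then show ?thesis using that by simp
  qed
  show "x = y"
  proof (cases "x n = y n")
    case True
    have "x i = y i" for i using eq True by (cases "i = n") auto
    then show ?thesis by (rule ext)
  next
    case False
    have "y i = flip x n i" for i using eq False unfolding flip_def by (cases "i = n") auto
    then have "y = flip x n" by (rule ext)
    then show ?thesis using xy assms unfolding xor_set_def by blast
  qed
qed

theorem proposition13:
  fixes X :: "(nat \<Rightarrow> bool) set"
  assumes "xor_set X"
  shows "maximal_thin X \<and> X \<notin> sets (borel :: (nat \<Rightarrow> bool) measure)"
proof
  show "maximal_thin X"
    unfolding maximal_thin_def
  proof (intro conjI allI impI)
    show "thin X" using thin_xor[OF assms] .
    fix T assume T: "thin T \<and> X \<subseteq> T"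
    show "T = X"
    proof (rule ccontr)
      assume "T \<noteq> X"
      then obtain y where y: "y \<in> T" "y \<notin> X" using T by blast
      then have "flip y 0 \<in> X" using assms unfolding xor_set_def by blast
      then have f: "flip y 0 \<in> T" using T by blast
      have "restrict (flip y 0) (UNIV - {0}) = restrict y (UNIV - {0})"
        unfolding flip_def restrict_def by auto
      moreover have "inj_on (\<lambda>x. restrict x (UNIV - {0::nat})) T" using T unfolding thin_def by blast
      ultimately have "flip y 0 = y" using f y(1) by (simp add: inj_on_def)
      then show False unfolding flip_def by (metis fun_upd_same)
    qed
  qed
  show "X \<notin> sets borel" using not_borel[OF assms] .
qed

end
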